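(* For any prime $p$, coefficientwise in $\mathbb{Z}[\![t]\!]$, \[ U(t) \equiv \Big( \sum_{m=0}^{[p/6]} u_{m} t^{m} \Big) U(t^{p}) \pmod{p},\qquad V(t) \equiv \Big( \sum_{m=0}^{[p/6]} (6m+1) u_{m} t^{m} \Big) U(t^{p}) \pmod{p}. \] In particular, $u_{r} \equiv 0\pmod{p}$ for all $r\ge1$ and $p\in \{2, 3, 5\}$.
   Context: For $r\ge0$ let $u_{r} = \frac{(6r)!}{(3r)!\, r!^{3}} = \binom{2r}{r} \binom{3r}{r} \binom{6r}{3r}$, and let $U(t)=\sum_{r\ge0}u_rt^r = {}_{3}F_{2}(\tfrac16,\tfrac12,\tfrac56;1,1;1728t)$ and $V(t)=\sum_{r\ge0}(6r+1)u_rt^r=(1+6t\tfrac{d}{dt})U(t)$. $[x]$ is the integer part. A congruence of formal power series modulo $N$ means all coefficients of the difference are divisible by $N$. *)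

theory Defs
  imports "HOL-Computational_Algebra.Formal_Power_Series" "HOL-Number_Theory.Cong"
begin

definition u :: "nat \<Rightarrow> int" where
  "u r = int (fact (6*r) div (fact (3*r) * (fact r)^3))"

definition U :: "int fps" where
  "U = Abs_fps u"

definition V :: "int fps" where
  "V = Abs_fps (\<lambda>r. (6 * int r + 1) * u r)"

definition fps_subst_pow :: "nat \<Rightarrow> 'a::zero fps \<Rightarrow> 'a fps" where
  "fps_subst_pow p f = Abs_fps (\<lambda>n. if p dvd n then fps_nth f (n div p) else 0)"

definition fps_cong :: "int fps \<Rightarrow> int fps \<Rightarrow> int \<Rightarrow> bool" where
  "fps_cong A B N \<longleftrightarrow> (\<forall>n. [fps_nth A n = fps_nth B n] (mod N))"

end

theory Submission
  imports Defs "HOL-Computational_Algebra.Primes"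
begin

lemma lucas:
  fixes p T K :: nat
  assumes p: "prime p"
  shows "[T choose K = (T div p choose K div p) * (T mod p choose K mod p)] (mod p)"
proof (induction T arbitrary: K)
  case 0
  have "p > 0" using p prime_gt_0_nat by blast
  show ?case
  proof (cases "K = 0")
    case False
    have "K div p \<noteq> 0 \<or> K mod p \<noteq> 0"
      using False div_mult_mod_eq[of K p] by (metis add_0 mult_0)
    then show ?thesis using False by (auto simp: binomial_eq_0)
  qed simp
next
  case (Suc T)
  have p1: "p > 1" using p prime_gt_1_nat by blast
  show ?case
  proof (cases K)
    case 0
    then show ?thesis by simp
  next
    case (Suc k)
    define M where "M = T div p"
    define m where "m = T mod p"
    define N where "N = k div p"
    define n where "n = k mod p"
    have mp: "m < p" "n < p" using p1 by (auto simp: m_def n_def)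
    have IH1: "[T choose k = (M choose N) * (m choose n)] (mod p)" using Suc.IH M_def m_def N_def n_def by blast
    have IH2: "[T choose Suc k = (M choose (Suc k div p)) * (m choose (Suc k mod p))] (mod p)" using Suc.IH M_def m_def by blast
    have eq: "Suc T choose K = (T choose k) + (T choose Suc k)" using Suc by simp
    have c: "[Suc T choose K = (M choose N) * (m choose n) + (M choose (Suc k div p)) * (m choose (Suc k mod p))] (mod p)"
      unfolding eq by (intro cong_add IH1 IH2)
    show ?thesis
    proof (cases "Suc m = p")
      case False
      hence T1: "Suc T div p = M" "Suc T mod p = Suc m"
        using mp by (auto simp: div_Suc mod_Suc M_def m_def)
      show ?thesis
      proof (cases "Suc n = p")
        case False
        hence K1: "K div p = N" "K mod p = Suc n" "Suc k div p = N" "Suc k mod p = Suc n"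
          using mp by (auto simp: div_Suc mod_Suc N_def n_def Suc)
        show ?thesis using c unfolding T1 K1 by (simp add: algebra_simps)
      next
        case True
        hence K1: "K div p = Suc N" "K mod p = 0" "Suc k div p = Suc N" "Suc k mod p = 0"
          using mp by (auto simp: div_Suc mod_Suc N_def n_def Suc)
        have "m choose n = 0" using True \<open>Suc m \<noteq> p\<close> mp by simp
        then show ?thesis using c unfolding T1 K1 by (simp add: binomial_eq_0)
      qed
    next
      case True
      hence T1: "Suc T div p = Suc M" "Suc T mod p = 0"
        using mp by (auto simp: div_Suc mod_Suc M_def m_def)
      show ?thesis
      proof (cases "Suc n = p")
        case False
        hence K1: "K div p = N" "K mod p = Suc n" "Suc k div p = N" "Suc k mod p = Suc n"
          using mp by (auto simp: div_Suc mod_Suc N_def n_def Suc)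
        have "(M choose N) * (m choose n) + (M choose N) * (m choose Suc n) = (M choose N) * (p choose Suc n)"
          using True[symmetric] by (simp add: distrib_left)
        moreover have "p dvd (p choose Suc n)"
          using dvd_choose_prime[of "Suc n" p] False mp p p1 by auto
        ultimately have "[(M choose N) * (m choose n) + (M choose N) * (m choose Suc n) = 0] (mod p)"
          by (simp add: cong_0_iff)
        then show ?thesis using c unfolding T1 K1 by (auto elim: cong_trans)
      next
        case True
        hence K1: "K div p = Suc N" "K mod p = 0" "Suc k div p = Suc N" "Suc k mod p = 0"
          using mp by (auto simp: div_Suc mod_Suc N_def n_def Suc)
        have "m = n" using True \<open>Suc m = p\<close> by simp
        then show ?thesis using c unfolding T1 K1 by (simp add: add.commute)
      qed
    qed
  qed
qed


definition B :: "nat \<Rightarrow> nat" where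
  "B r = (2*r choose r) * (3*r choose r) * (6*r choose (3*r))"

lemma u_B: "u r = int (B r)"
proof -
  have f2: "fact (2*r) = fact r * fact r * (2*r choose r)"
    using binomial_fact_lemma[of r "2*r"] by (simp add: mult_2)
  have f3: "fact (3*r) = fact r * fact (2*r) * (3*r choose r)"
    using binomial_fact_lemma[of r "3*r"] by simp
  have f6: "fact (6*r) = fact (3*r) * fact (3*r) * (6*r choose (3*r))"
    using binomial_fact_lemma[of "3*r" "6*r"] by simp
  have "(fact (6*r) :: nat) = (fact (3*r) * fact r ^ 3) * B r"
    unfolding B_def f6 apply (subst (2) f3) unfolding f2 by (simp add: power3_eq_cube algebra_simps)
  then have "fact (6*r) div (fact (3*r) * fact r ^ 3) = B r"
    by (simp add: fact_nonzero)
  then show ?thesis unfolding u_def by simp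
qed

lemma dm: "c < (p::nat) \<Longrightarrow> (p*q + c) div p = q \<and> (p*q + c) mod p = c"
  by auto

lemma luc: "prime p \<Longrightarrow> T = p*Q + m \<Longrightarrow> K = p*N + n \<Longrightarrow> m < p \<Longrightarrow> n < p \<Longrightarrow>
   [T choose K = (Q choose N) * (m choose n)] (mod p)"
  using lucas[of p T K] dm[of m p Q] dm[of n p N] by simp

lemma key:
  assumes p: "prime p"
  shows "[B r = (if 6*(r mod p) < p then B (r mod p) * B (r div p) else 0)] (mod p)"
proof -
  define a where "a = r mod p"
  define b where "b = r div p"
  have p0: "p > 0" using p prime_gt_0_nat by blast
  have ap: "a < p" using p0 by (simp add: a_def)
  have r: "r = p*b + a" by (simp add: a_def b_def)
  have L2: "[2*r choose r = (Q choose b) * (m choose a)] (mod p)" if "2*r = p*Q+m" "m<p" for Q m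
    using luc[OF p that(1) r that(2) ap] .
  have L3: "[3*r choose r = (Q choose b) * (m choose a)] (mod p)" if "3*r = p*Q+m" "m<p" for Q m
    using luc[OF p that(1) r that(2) ap] .
  have L6: "[6*r choose (3*r) = (Q choose (3*b)) * (m choose (3*a))] (mod p)"
    if "6*r = p*Q+m" "m<p" "3*a < p" for Q m
  proof -
    have "3*r = p*(3*b) + 3*a" using r by simp
    from luc[OF p that(1) this that(2) that(3)] show ?thesis .
  qed
  show ?thesis
  proof (cases "6*a < p")
    case True
    have "[B r = ((2*b choose b) * (2*a choose a)) * ((3*b choose b) * (3*a choose a))
                 * ((6*b choose (3*b)) * (6*a choose (3*a)))] (mod p)"
      unfolding B_def
      by (intro cong_mult L2 L3 L6) (use True r in auto)
    then show ?thesis using True unfolding a_def[symmetric] b_def[symmetric] B_def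
      by (simp add: algebra_simps)
  next
    case False
    have "[B r = 0] (mod p)"
    proof (cases "2*a < p")
      case False
      have "[2*r choose r = ((2*b+1) choose b) * ((2*a-p) choose a)] (mod p)"
        by (rule L2) (use False r ap in auto)
      also have "(2*a-p) choose a = 0" using ap False p0 by (simp add: binomial_eq_0)
      finally have "[B r = 0 * ((3*r choose r) * (6*r choose (3*r)))] (mod p)"
        unfolding B_def mult.assoc by (intro cong_mult cong_refl) simp
      then show ?thesis by simp
    next
      case T2: True
      show ?thesis
      proof (cases "3*a < p")
        case False
        have "[3*r choose r = ((3*b+1) choose b) * ((3*a-p) choose a)] (mod p)"
          by (rule L3) (use False T2 r ap in auto)
        also have "(3*a-p) choose a = 0" using ap T2 False p0 by (simp add: binomial_eq_0)
        finally have "[B r = (2*r choose r) * 0 * (6*r choose (3*r))] (mod p)"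
          unfolding B_def by (intro cong_mult cong_refl) simp
        then show ?thesis by simp
      next
        case T3: True
        have "[6*r choose (3*r) = ((6*b+1) choose (3*b)) * ((6*a-p) choose (3*a))] (mod p)"
          by (rule L6) (use False T3 r ap in auto)
        also have "(6*a-p) choose (3*a) = 0" using ap T3 False p0 by (simp add: binomial_eq_0)
        finally have "[B r = (2*r choose r) * (3*r choose r) * 0] (mod p)"
          unfolding B_def by (intro cong_mult cong_refl) simp
        then show ?thesis by simp
      qed
    qed
    then show ?thesis using False by (simp add: a_def)
  qed
qed

lemma key_int:
  assumes p: "prime p"
  shows "[u r = (if 6*(r mod p) < p then u (r mod p) * u (r div p) else 0)] (mod int p)"
  using key[OF p, of r] unfolding u_B
  by (metis (full_types) cong_int_iff of_nat_0 of_nat_mult)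


lemma six_lt:
  fixes a p :: nat
  assumes p: "prime p"
  shows "(a \<le> p div 6) \<longleftrightarrow> 6*a < p"
proof -
  have "6*a \<noteq> p"
  proof
    assume h: "6*a = p"
    have "p = 2 * (3 * a)" using h by simp
    then have "2 dvd p" by (rule dvdI)
    then have "p = 2" using p unfolding prime_nat_iff by auto
    then show False using h by simp
  qed
  then show ?thesis by auto
qed

lemma coef:
  fixes c :: "nat \<Rightarrow> int"
  assumes p: "prime p"
  shows "fps_nth ((\<Sum>m = 0..p div 6. fps_const (c m) * fps_X ^ m) * fps_subst_pow p U) n
        = (if 6*(n mod p) < p then c (n mod p) * u (n div p) else 0)"
proof -
  have p0: "p > 0" using p prime_gt_0_nat by blast
  have t: "fps_nth (fps_const (c m) * fps_X ^ m * fps_subst_pow p U) n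
        = (if m = n mod p then c m * u (n div p) else 0)" if m: "m \<in> {0..p div 6}" for m
  proof -
    have mp: "m < p" using m p0 by auto
    have "fps_nth (fps_const (c m) * fps_X ^ m * fps_subst_pow p U) n
        = c m * (if n < m then 0 else (if p dvd (n - m) then u ((n - m) div p) else 0))"
      by (simp add: mult.assoc fps_X_power_mult_nth fps_subst_pow_def U_def)
    also have "\<dots> = (if m = n mod p then c m * u (n div p) else 0)"
    proof (cases "m = n mod p")
      case True
      have "n - m = p * (n div p)" using True by (simp add: minus_mod_eq_mult_div)
      moreover have "n mod p \<le> n" by (rule mod_less_eq_dividend)
      then have "\<not> n < m" using True by linarith
      ultimately show ?thesis using True p0 by simp
    next
      case False
      have "\<not> (\<not> n < m \<and> p dvd (n - m))"
      proof
        assume h: "\<not> n < m \<and> p dvd (n - m)"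
        then obtain k where "n - m = p * k" by blast
        then have "n = p*k + m" using h by simp
        then have "n mod p = m" using mp by simp
        then show False using False by simp
      qed
      then show ?thesis using False by auto
    qed
    finally show ?thesis .
  qed
  have "fps_nth ((\<Sum>m = 0..p div 6. fps_const (c m) * fps_X ^ m) * fps_subst_pow p U) n
      = (\<Sum>m = 0..p div 6. fps_nth (fps_const (c m) * fps_X ^ m * fps_subst_pow p U) n)"
    by (simp add: sum_distrib_right fps_sum_nth)
  also have "\<dots> = (\<Sum>m = 0..p div 6. (if m = n mod p then c m * u (n div p) else 0))"
    by (rule sum.cong) (use t in auto)
  also have "\<dots> = (if n mod p \<in> {0..p div 6} then c (n mod p) * u (n div p) else 0)"
    by (simp add: sum.delta')
  also have "\<dots> = (if 6*(n mod p) < p then c (n mod p) * u (n div p) else 0)"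
    using six_lt[OF p, of "n mod p"] by simp
  finally show ?thesis .
qed

theorem proposition3p1:
  fixes p :: nat
  assumes "prime p"
  shows "fps_cong U ((\<Sum>m = 0..p div 6. fps_const (u m) * fps_X ^ m) * fps_subst_pow p U) (int p)
       \<and> fps_cong V ((\<Sum>m = 0..p div 6. fps_const ((6 * int m + 1) * u m) * fps_X ^ m) * fps_subst_pow p U) (int p)
       \<and> (p \<in> {2, 3, 5} \<longrightarrow> (\<forall>r\<ge>1. [u r = 0] (mod int p)))"
proof (intro conjI)
  have p: "prime p" by fact
  show "fps_cong U ((\<Sum>m = 0..p div 6. fps_const (u m) * fps_X ^ m) * fps_subst_pow p U) (int p)"
    unfolding fps_cong_def coef[OF p] using key_int[OF p] by (simp add: U_def)
  show "fps_cong V ((\<Sum>m = 0..p div 6. fps_const ((6 * int m + 1) * u m) * fps_X ^ m) * fps_subst_pow p U) (int p)"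
    unfolding fps_cong_def coef[OF p]
  proof
    fix n
    have k: "[(6 * int n + 1) * u n = (6 * int n + 1) * (if 6*(n mod p) < p then u (n mod p) * u (n div p) else 0)] (mod int p)"
      by (intro cong_mult cong_refl key_int[OF p])
    have n: "int n = int p * int (n div p) + int (n mod p)"
      by (metis of_nat_add of_nat_mult div_mult_mod_eq mult.commute)
    have c6: "[6 * int n + 1 = 6 * int (n mod p) + 1] (mod int p)"
    proof -
      have e1: "6 * int n + 1 = (6 * int (n mod p) + 1) + int p * (6 * int (n div p))"
        using n by (simp add: algebra_simps)
      have e2: "((6 * int (n mod p) + 1) + int p * (6 * int (n div p))) mod int p = (6 * int (n mod p) + 1) mod int p"
        by simp
      show ?thesis unfolding cong_def e1 by (rule e2)
    qed
    show "[fps_nth V n = (if 6 * (n mod p) < p then (6 * int (n mod p) + 1) * u (n mod p) * u (n div p) else 0)] (mod int p)"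
    proof (cases "6*(n mod p) < p")
      case True
      have c7: "[(6 * int n + 1) * (u (n mod p) * u (n div p)) = (6 * int (n mod p) + 1) * (u (n mod p) * u (n div p))] (mod int p)"
        by (intro cong_mult c6 cong_refl)
      have "[fps_nth V n = (6 * int n + 1) * (u (n mod p) * u (n div p))] (mod int p)"
        using k True by (simp add: V_def)
      from cong_trans[OF this c7]
      show ?thesis using True by (simp add: mult.assoc)
    next
      case False
      then show ?thesis using k by (simp add: V_def)
    qed
  qed
  show "p \<in> {2, 3, 5} \<longrightarrow> (\<forall>r\<ge>1. [u r = 0] (mod int p))"
  proof (intro impI)
    assume p235: "p \<in> {2, 3, 5}"
    have main: "1 \<le> r \<longrightarrow> [u r = 0] (mod int p)" for r
    proof (induction r rule: less_induct)
      case (less r)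
      show ?case
      proof
        assume r1: "1 \<le> r"
        have p1: "p > 1" using p prime_gt_1_nat by blast
        show "[u r = 0] (mod int p)"
        proof (cases "r mod p = 0")
          case False
          then have "6 \<le> 6 * (r mod p)" by simp
          moreover have "p \<le> 5" using p235 by auto
          ultimately have "\<not> 6 * (r mod p) < p" by linarith
          then show ?thesis using key_int[OF p, of r] by simp
        next
          case True
          have u0: "u 0 = 1" by (simp add: u_def)
          have "r div p < r" using r1 p1 by simp
          moreover have "1 \<le> r div p"
          proof -
            have "r = p * (r div p)" using mult_div_mod_eq[of p r] True by simp
            then show ?thesis using r1 by (cases "r div p = 0") auto
          qed
          ultimately have "[u (r div p) = 0] (mod int p)" using less by blast
          moreover have "[u r = u (r div p)] (mod int p)" using key_int[OF p, of r] True u0 p1 by simp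
          ultimately show ?thesis using cong_trans by blast
        qed
      qed
    qed
    then show "\<forall>r\<ge>1. [u r = 0] (mod int p)" by blast
  qed
qed

end
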